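(* Let $f_1$ and $g_1$ be smooth functions of one variable and consider the equation $$m_t+u_xf_1(u^2-u_x^2)\,m+\Big(\big(uf_1(u^2-u_x^2)+g_1(u^2-u_x^2)\big)m\Big)_x=0,\qquad m=u-u_{xx}.$$ No smooth solitary travelling wave solutions of this equation exist with arbitrary wave speed: for every constant $c\neq0$ with $c\neq g_1(0)$ there is no smooth solitary travelling wave solution with speed $c$. In particular, if $g_1(0)=0$, no smooth solitary travelling wave solutions exist (neither with arbitrary nor with a fixed wave speed).
   Context: A smooth solitary travelling wave solution with speed $c\neq0$ is a solution of the form $u=U(\xi)$, $\xi=x-ct$, with $U$ smooth and not identically zero, such that $U$ and its derivatives tend to zero as $|\xi|\to\infty$. *)

theory Defs
  imports "HOL-Analysis.Analysis"
begin

definition smooth :: "(real \<Rightarrow> real) \<Rightarrow> bool" where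
  "smooth f \<longleftrightarrow> (\<forall>n x. (deriv ^^ n) f differentiable (at x))"

definition solitary_profile :: "(real \<Rightarrow> real) \<Rightarrow> bool" where
  "solitary_profile U \<longleftrightarrow> smooth U \<and> (\<exists>\<xi>. U \<xi> \<noteq> 0) \<and>
     (\<forall>n. ((deriv ^^ n) U \<longlongrightarrow> 0) at_top \<and> ((deriv ^^ n) U \<longlongrightarrow> 0) at_bot)"

definition pdx :: "(real \<Rightarrow> real \<Rightarrow> real) \<Rightarrow> real \<Rightarrow> real \<Rightarrow> real" where
  "pdx w t x = deriv (\<lambda>y. w t y) x"

definition pdt :: "(real \<Rightarrow> real \<Rightarrow> real) \<Rightarrow> real \<Rightarrow> real \<Rightarrow> real" where
  "pdt w t x = deriv (\<lambda>s. w s x) t"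

definition solves_eq :: "(real \<Rightarrow> real) \<Rightarrow> (real \<Rightarrow> real) \<Rightarrow> (real \<Rightarrow> real \<Rightarrow> real) \<Rightarrow> bool" where
  "solves_eq f1 g1 u \<longleftrightarrow>
    (let m = (\<lambda>t x. u t x - pdx (pdx u) t x);
         Q = (\<lambda>t x. (u t x)\<^sup>2 - (pdx u t x)\<^sup>2)
     in \<forall>t x. pdt m t x + pdx u t x * f1 (Q t x) * m t x
              + pdx (\<lambda>t x. (u t x * f1 (Q t x) + g1 (Q t x)) * m t x) t x = 0)"

end

theory Submission
  imports Defs
begin
lemma smooth_D:
  assumes "smooth f"
  shows "((deriv ^^ n) f has_real_derivative (deriv ^^ Suc n) f x) (at x)"
  using assms unfolding smooth_def
  by (simp add: DERIV_deriv_iff_real_differentiable)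

lemma smooth_D0: "smooth f \<Longrightarrow> (f has_real_derivative deriv f x) (at x)"
  using smooth_D[of f 0 x] by simp

lemma smooth_D1: "smooth f \<Longrightarrow> (deriv f has_real_derivative deriv (deriv f) x) (at x)"
  using smooth_D[of f 1 x] by simp

lemma smooth_D2: "smooth f \<Longrightarrow> (deriv (deriv f) has_real_derivative deriv (deriv (deriv f)) x) (at x)"
  using smooth_D[of f 2 x] by (simp add: numeral_2_eq_2)

lemma antideriv_ex:
  fixes f :: "real \<Rightarrow> real"
  assumes "\<And>x. isCont f x"
  shows "\<exists>F. F 0 = 0 \<and> (\<forall>x. (F has_real_derivative f x) (at x))"
proof -
  obtain F where F: "\<And>x. (F has_vector_derivative f x) (at x)"
    using einterval_antiderivative[of "-\<infinity>" "\<infinity>" f] assms by auto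
  show ?thesis
    apply (rule exI[of _ "\<lambda>x. F x - F 0"])
    using F by (auto simp: has_real_derivative_iff_has_vector_derivative intro!: derivative_eq_intros)
qed

lemma pdx_shift:
  assumes "\<And>x. (V has_real_derivative V' x) (at x)"
  shows "pdx (\<lambda>t x. V (x - c*t)) = (\<lambda>t x. V' (x - c*t))"
proof (intro ext)
  fix t x
  have "((\<lambda>y. V (y - c*t)) has_real_derivative V' (x - c*t) * 1) (at x)"
    by (rule DERIV_chain2[OF assms]) (auto intro!: derivative_eq_intros)
  then show "pdx (\<lambda>t x. V (x - c*t)) t x = V' (x - c*t)"
    unfolding pdx_def by (simp add: DERIV_imp_deriv)
qed

lemma pdt_shift:
  assumes "\<And>x. (V has_real_derivative V' x) (at x)"
  shows "pdt (\<lambda>t x. V (x - c*t)) = (\<lambda>t x. - c * V' (x - c*t))"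
proof (intro ext)
  fix t x
  have "((\<lambda>r. V (x - c*r)) has_real_derivative V' (x - c*t) * (- c)) (at t)"
    by (rule DERIV_chain2[OF assms]) (auto intro!: derivative_eq_intros)
  then show "pdt (\<lambda>t x. V (x - c*t)) t x = - c * V' (x - c*t)"
    unfolding pdt_def by (simp add: DERIV_imp_deriv mult.commute)
qed

lemma quot_cont0:
  assumes "(F has_real_derivative f0) (at 0)" "F 0 = 0"
  shows "isCont (\<lambda>y. if y = 0 then f0 else F y / y) 0"
proof -
  have "((\<lambda>h. (F (0 + h) - F 0) / h) \<longlongrightarrow> f0) (at 0)"
    using assms(1) by (simp add: DERIV_def)
  then have "((\<lambda>y. F y / y) \<longlongrightarrow> f0) (at 0)" using assms(2) by simp
  then have "((\<lambda>y. if y = 0 then f0 else F y / y) \<longlongrightarrow> f0) (at 0)"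
    by (rule tendsto_cong[THEN iffD1, rotated]) (auto simp: eventually_at_filter)
  then show ?thesis by (simp add: isCont_def)
qed

lemma quot_bound:
  fixes f F f' :: "real \<Rightarrow> real"
  assumes df: "\<And>x. (f has_real_derivative f' x) (at x)"
    and cf': "isCont f' 0"
    and dF: "\<And>x. (F has_real_derivative f x) (at x)"
    and F0: "F 0 = 0"
  shows "\<exists>d>0. \<exists>B. \<forall>y. y \<noteq> 0 \<and> \<bar>y\<bar> < d \<longrightarrow> \<bar>f y - F y / y\<bar> \<le> B * \<bar>y\<bar>"
proof -
  obtain d where d0: "d > 0" and d1: "\<And>y. y \<noteq> 0 \<and> \<bar>y - 0\<bar> < d \<longrightarrow> \<bar>f' y - f' 0\<bar> < 1"
    using cf' unfolding isCont_def tendsto_iff eventually_at dist_real_def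
    by (metis less_numeral_extra(1) UNIV_I)
  have d: "d > 0" "\<And>y. \<bar>y - 0\<bar> < d \<Longrightarrow> \<bar>f' y - f' 0\<bar> < 1"
    using d0 d1 by (metis abs_zero diff_self less_numeral_extra(1))+
  define B where "B = \<bar>f' 0\<bar> + 1"
  have fb: "\<bar>f' z\<bar> \<le> B" if "\<bar>z\<bar> < d" for z
    using d(2)[of z] that unfolding B_def by auto
  have main: "\<bar>f y - F y / y\<bar> \<le> B * \<bar>y\<bar>" if "y \<noteq> 0" "\<bar>y\<bar> < d" for y
  proof (cases "y > 0")
    case True
    obtain e where e: "0 < e" "e < y" "F y - F 0 = (y - 0) * f e"
      using MVT2[OF True, of F f] dF by auto
    obtain z where z: "e < z" "z < y" "f y - f e = (y - e) * f' z"
      using MVT2[OF e(2), of f f'] df by auto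
    have "F y / y = f e" using e True F0 by (simp add: field_simps)
    then have "\<bar>f y - F y / y\<bar> = \<bar>y - e\<bar> * \<bar>f' z\<bar>" using z by (simp add: abs_mult)
    also have "\<dots> \<le> \<bar>y\<bar> * B"
      apply (rule mult_mono) using e z that fb[of z] by auto
    finally show ?thesis by (simp add: mult.commute)
  next
    case False
    then have yn: "y < 0" using that by auto
    obtain e where e: "y < e" "e < 0" "F 0 - F y = (0 - y) * f e"
      using MVT2[OF yn, of F f] dF by auto
    obtain z where z: "y < z" "z < e" "f e - f y = (e - y) * f' z"
      using MVT2[OF e(1), of f f'] df by auto
    have "F y / y = f e" using e yn F0 by (simp add: field_simps)
    then have "\<bar>f y - F y / y\<bar> = \<bar>e - y\<bar> * \<bar>f' z\<bar>" using z
      by (metis abs_minus_commute abs_mult)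
    also have "\<dots> \<le> \<bar>y\<bar> * B"
      apply (rule mult_mono) using e z that fb[of z] by auto
    finally show ?thesis by (simp add: mult.commute)
  qed
  show ?thesis using d(1) main by blast
qed

lemma zero_at_left_end:
  fixes f :: "real \<Rightarrow> real"
  assumes "isCont f a" "\<And>t. t < a \<Longrightarrow> f t = 0"
  shows "f a = 0"
proof -
  have "(f \<longlongrightarrow> f a) (at_left a)"
    using assms(1) by (simp add: isCont_def filterlim_at_split)
  moreover have "(f \<longlongrightarrow> 0) (at_left a)"
    by (rule tendsto_eventually) (auto simp: eventually_at_left_field assms(2) intro: exI[of _ "a - 1"])
  ultimately show ?thesis
    using tendsto_unique[OF trivial_limit_at_left_real] by blast
qed

theorem proposition1:
  fixes f1 g1 :: "real \<Rightarrow> real" and c :: real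
  assumes "smooth f1" and "smooth g1"
    and "c \<noteq> 0" and "c \<noteq> g1 0"
  shows "\<not> (\<exists>U. solitary_profile U \<and> solves_eq f1 g1 (\<lambda>t x. U (x - c * t)))"
proof
  assume "\<exists>U. solitary_profile U \<and> solves_eq f1 g1 (\<lambda>t x. U (x - c * t))"
  then obtain U where sp: "solitary_profile U" and eq: "solves_eq f1 g1 (\<lambda>t x. U (x - c * t))"
    by blast
  have smU: "smooth U" and nz: "\<exists>\<xi>. U \<xi> \<noteq> 0"
    and lim: "\<And>n. ((deriv ^^ n) U \<longlongrightarrow> 0) at_top" "\<And>n. ((deriv ^^ n) U \<longlongrightarrow> 0) at_bot"
    using sp unfolding solitary_profile_def by auto
  define U1 where "U1 = deriv U"
  define U2 where "U2 = deriv U1"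
  define U3 where "U3 = deriv U2"
  have dU: "\<And>x. (U has_real_derivative U1 x) (at x)"
    unfolding U1_def using smooth_D0[OF smU] .
  have dU1: "\<And>x. (U1 has_real_derivative U2 x) (at x)"
    unfolding U2_def U1_def using smooth_D1[OF smU] .
  have dU2: "\<And>x. (U2 has_real_derivative U3 x) (at x)"
    unfolding U3_def U2_def U1_def using smooth_D2[OF smU] .
  have cU: "\<And>x. isCont U x" using dU DERIV_isCont by blast
  have cU1: "\<And>x. isCont U1 x" using dU1 DERIV_isCont by blast
  have cU2: "\<And>x. isCont U2 x" using dU2 DERIV_isCont by blast
  have lU: "(U \<longlongrightarrow> 0) at_bot" "(U \<longlongrightarrow> 0) at_top" using lim[of 0] by auto
  have lU1: "(U1 \<longlongrightarrow> 0) at_bot" using lim(2)[of 1] by (simp add: U1_def)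
  have lU2: "(U2 \<longlongrightarrow> 0) at_bot" using lim(2)[of 2] by (simp add: U2_def U1_def numeral_2_eq_2)
  define f1' where "f1' = deriv f1"
  define g1' where "g1' = deriv g1"
  have df1: "\<And>x. (f1 has_real_derivative f1' x) (at x)"
    unfolding f1'_def using smooth_D0[OF assms(1)] .
  have dg1: "\<And>x. (g1 has_real_derivative g1' x) (at x)"
    unfolding g1'_def using smooth_D0[OF assms(2)] .
  have cf1': "isCont f1' 0" unfolding f1'_def using smooth_D1[OF assms(1)] DERIV_isCont by blast
  have cg1': "isCont g1' 0" unfolding g1'_def using smooth_D1[OF assms(2)] DERIV_isCont by blast
  have cf1: "\<And>x. isCont f1 x" using df1 DERIV_isCont by blast
  have cg1: "\<And>x. isCont g1 x" using dg1 DERIV_isCont by blast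
  obtain F where F0: "F 0 = 0" and dF: "\<And>x. (F has_real_derivative f1 x) (at x)"
    using antideriv_ex[OF cf1] by blast
  obtain G where G0: "G 0 = 0" and dG: "\<And>x. (G has_real_derivative g1 x) (at x)"
    using antideriv_ex[OF cg1] by blast
  have cF: "\<And>x. isCont F x" using dF DERIV_isCont by blast
  have cG: "\<And>x. isCont G x" using dG DERIV_isCont by blast
  define M where "M = (\<lambda>x. U x - U2 x)"
  define q where "q = (\<lambda>x. (U x)\<^sup>2 - (U1 x)\<^sup>2)"
  have dM: "\<And>x. (M has_real_derivative (U1 x - U3 x)) (at x)"
    unfolding M_def by (auto intro!: derivative_eq_intros dU dU2)
  have dq: "\<And>x. (q has_real_derivative 2 * U1 x * M x) (at x)"
    unfolding q_def M_def by (auto intro!: derivative_eq_intros dU dU1 simp: algebra_simps)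
  have cq: "\<And>x. isCont q x" using dq DERIV_isCont by blast
  have cM: "\<And>x. isCont M x" using dM DERIV_isCont by blast
  have dfq: "\<And>x. ((\<lambda>x. f1 (q x)) has_real_derivative f1' (q x) * (2 * U1 x * M x)) (at x)"
    by (rule DERIV_chain2[OF df1 dq])
  have dgq: "\<And>x. ((\<lambda>x. g1 (q x)) has_real_derivative g1' (q x) * (2 * U1 x * M x)) (at x)"
    by (rule DERIV_chain2[OF dg1 dq])
  have dFq: "\<And>x. ((\<lambda>x. F (q x)) has_real_derivative f1 (q x) * (2 * U1 x * M x)) (at x)"
    by (rule DERIV_chain2[OF dF dq])
  have dGq: "\<And>x. ((\<lambda>x. G (q x)) has_real_derivative g1 (q x) * (2 * U1 x * M x)) (at x)"
    by (rule DERIV_chain2[OF dG dq])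
  define K where "K = (\<lambda>x. (U x * f1 (q x) + g1 (q x)) * M x)"
  define DK where "DK = (\<lambda>x. (U1 x * f1 (q x) + (f1' (q x) * (2 * U1 x * M x)) * U x
       + g1' (q x) * (2 * U1 x * M x)) * M x + (U1 x - U3 x) * (U x * f1 (q x) + g1 (q x)))"
  have dK: "\<And>x. (K has_real_derivative DK x) (at x)"
  proof -
    fix x
    have "((\<lambda>x. U x * f1 (q x) + g1 (q x)) has_real_derivative
      U1 x * f1 (q x) + (f1' (q x) * (2 * U1 x * M x)) * U x + g1' (q x) * (2 * U1 x * M x)) (at x)"
      by (intro DERIV_add DERIV_mult dU dfq dgq)
    from DERIV_mult[OF this dM[of x]] show "(K has_real_derivative DK x) (at x)"
      unfolding K_def DK_def by simp
  qed
  have pdxu: "pdx (\<lambda>t x. U (x - c * t)) = (\<lambda>t x. U1 (x - c * t))"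
    by (rule pdx_shift[OF dU])
  have pdxu1: "pdx (\<lambda>t x. U1 (x - c * t)) = (\<lambda>t x. U2 (x - c * t))"
    by (rule pdx_shift[OF dU1])
  have pdtM: "pdt (\<lambda>t x. M (x - c * t)) = (\<lambda>t x. - c * (U1 (x - c * t) - U3 (x - c * t)))"
    by (rule pdt_shift[OF dM])
  have pdxK: "pdx (\<lambda>t x. K (x - c * t)) = (\<lambda>t x. DK (x - c * t))"
    by (rule pdx_shift[OF dK])
  have mform: "(\<lambda>t x. U (x - c * t) - pdx (pdx (\<lambda>t x. U (x - c * t))) t x) = (\<lambda>t x. M (x - c * t))"
    unfolding pdxu pdxu1 M_def by simp
  have Kform: "(\<lambda>t x. (U (x - c * t) * f1 ((U (x - c * t))\<^sup>2 - (pdx (\<lambda>t x. U (x - c * t)) t x)\<^sup>2)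
       + g1 ((U (x - c * t))\<^sup>2 - (pdx (\<lambda>t x. U (x - c * t)) t x)\<^sup>2)) *
       (U (x - c * t) - pdx (pdx (\<lambda>t x. U (x - c * t))) t x)) = (\<lambda>t x. K (x - c * t))"
    unfolding pdxu pdxu1 K_def M_def q_def by simp
  have pde: "- c * (U1 x - U3 x) + U1 x * f1 (q x) * M x + DK x = 0" for x
  proof -
    have "pdt (\<lambda>t x. U (x - c * t) - pdx (pdx (\<lambda>t x. U (x - c * t))) t x) 0 x
      + pdx (\<lambda>t x. U (x - c * t)) 0 x * f1 ((U (x - c * 0))\<^sup>2 - (pdx (\<lambda>t x. U (x - c * t)) 0 x)\<^sup>2)
        * (U (x - c * 0) - pdx (pdx (\<lambda>t x. U (x - c * t))) 0 x)
      + pdx (\<lambda>t x. (U (x - c * t) * f1 ((U (x - c * t))\<^sup>2 - (pdx (\<lambda>t x. U (x - c * t)) t x)\<^sup>2)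
       + g1 ((U (x - c * t))\<^sup>2 - (pdx (\<lambda>t x. U (x - c * t)) t x)\<^sup>2)) *
       (U (x - c * t) - pdx (pdx (\<lambda>t x. U (x - c * t))) t x)) 0 x = 0"
      using eq unfolding solves_eq_def Let_def by blast
    then show ?thesis unfolding mform Kform pdtM pdxK
      by (simp add: pdxu pdxu1 q_def M_def)
  qed
  define E where "E = (\<lambda>x. K x - c * M x + F (q x) / 2)"
  have "\<And>x. (E has_real_derivative 0) (at x)"
  proof -
    fix x
    have "(E has_real_derivative DK x - c * (U1 x - U3 x) + f1 (q x) * (2 * U1 x * M x) / 2) (at x)"
      unfolding E_def by (auto intro!: derivative_eq_intros dK dM dFq)
    moreover have "DK x - c * (U1 x - U3 x) + f1 (q x) * (2 * U1 x * M x) / 2 = 0"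
      using pde[of x] by (simp add: algebra_simps)
    ultimately show "(E has_real_derivative 0) (at x)" by simp
  qed
  then have Econst: "\<And>x. E x = E 0" using DERIV_isconst_all by blast
  have lq: "(q \<longlongrightarrow> 0) at_bot" unfolding q_def using lU lU1 by (auto intro!: tendsto_eq_intros)
  have lM: "(M \<longlongrightarrow> 0) at_bot" unfolding M_def using lU lU2 by (auto intro!: tendsto_eq_intros)
  have "(E \<longlongrightarrow> 0) at_bot"
  proof -
    have "(E \<longlongrightarrow> (0 * f1 0 + g1 0) * 0 - c * 0 + F 0 / 2) at_bot"
      unfolding E_def K_def
      by (intro tendsto_intros isCont_tendsto_compose[OF cf1 lq] isCont_tendsto_compose[OF cg1 lq]
            isCont_tendsto_compose[OF cF lq] lU lM) auto
    then show ?thesis using F0 by simp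
  qed
  moreover have "(E \<longlongrightarrow> E 0) at_bot" by (rule tendsto_eventually, rule always_eventually, rule allI, rule Econst)
  ultimately have "E 0 = 0" using tendsto_unique[OF trivial_limit_at_bot_linorder] by blast
  then have E0: "\<And>x. E x = 0" using Econst by metis
  define Phi where "Phi = (\<lambda>x. U x * F (q x) + G (q x) - c * q x)"
  have dPhi: "\<And>x. (Phi has_real_derivative 0) (at x)"
  proof -
    fix x
    have "(Phi has_real_derivative U1 x * F (q x) + (f1 (q x) * (2 * U1 x * M x)) * U x
        + g1 (q x) * (2 * U1 x * M x) - c * (2 * U1 x * M x)) (at x)"
      unfolding Phi_def by (intro DERIV_diff DERIV_add DERIV_mult DERIV_cmult dU dFq dGq dq)
    moreover have "U1 x * F (q x) + (f1 (q x) * (2 * U1 x * M x)) * U x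
        + g1 (q x) * (2 * U1 x * M x) - c * (2 * U1 x * M x) = 2 * U1 x * E x"
      unfolding E_def K_def by (simp add: algebra_simps)
    ultimately show "(Phi has_real_derivative 0) (at x)" using E0[of x] by simp
  qed
  then have Phiconst: "\<And>x. Phi x = Phi 0" using DERIV_isconst_all by blast
  have "(Phi \<longlongrightarrow> 0 * F 0 + G 0 - c * 0) at_bot"
    unfolding Phi_def
    by (intro tendsto_intros isCont_tendsto_compose[OF cF lq] isCont_tendsto_compose[OF cG lq] lU lq)
  then have lPhi: "(Phi \<longlongrightarrow> 0) at_bot" using G0 by simp
  moreover have "(Phi \<longlongrightarrow> Phi 0) at_bot"
    by (rule tendsto_eventually, rule always_eventually, rule allI, rule Phiconst)
  ultimately have "Phi 0 = 0" using tendsto_unique[OF trivial_limit_at_bot_linorder] by blast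
  then have Phi0: "\<And>x. Phi x = 0" using Phiconst by metis
  define F1 where "F1 = (\<lambda>y. if y = 0 then f1 0 else F y / y)"
  define G1 where "G1 = (\<lambda>y. if y = 0 then g1 0 else G y / y)"
  have cF1: "isCont F1 0" unfolding F1_def by (rule quot_cont0[OF dF F0])
  have cG1: "isCont G1 0" unfolding G1_def by (rule quot_cont0[OF dG G0])
  have FF1: "\<And>y. F y = y * F1 y" unfolding F1_def using F0 by auto
  have GG1: "\<And>y. G y = y * G1 y" unfolding G1_def using G0 by auto
  define psi where "psi = (\<lambda>x. U x * F1 (q x) + G1 (q x) - c)"
  have qpsi: "\<And>x. q x * psi x = 0"
    using Phi0 unfolding Phi_def psi_def by (simp add: FF1 GG1 algebra_simps)
  have cpsi: "\<And>x. q x = 0 \<Longrightarrow> isCont psi x"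
    unfolding psi_def
    by (intro continuous_intros cU isCont_o2[OF cq] ) (auto simp: cF1 cG1)
  have "(psi \<longlongrightarrow> 0 * F1 0 + G1 0 - c) at_bot"
    unfolding psi_def
    using isCont_tendsto_compose[OF cF1 lq] isCont_tendsto_compose[OF cG1 lq] lU
    by (intro tendsto_intros) auto
  then have lpsi: "(psi \<longlongrightarrow> g1 0 - c) at_bot" by (simp add: G1_def)
  have "\<forall>\<^sub>F x in at_bot. psi x \<noteq> 0"
    using tendsto_imp_eventually_ne[OF lpsi] assms(4) by auto
  then have "\<forall>\<^sub>F x in at_bot. q x = 0"
    by eventually_elim (use qpsi in auto)
  then obtain R where R: "\<And>x. x \<le> R \<Longrightarrow> q x = 0"
    unfolding eventually_at_bot_linorder by blast
  show False
  proof (cases "\<exists>t. q t \<noteq> 0")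
    case False
    then have q0: "\<And>t. q t = 0" by blast
    obtain x0 where x0: "U x0 \<noteq> 0" using nz by blast
    define W where "W = (\<lambda>x. U x * U x)"
    have W0: "W x0 > 0" using x0 unfolding W_def by (metis not_real_square_gt_zero)
    have dW: "\<And>x. (W has_real_derivative U1 x * U x + U1 x * U x) (at x)"
      unfolding W_def by (intro DERIV_mult dU)
    have cW: "continuous_on S W" for S unfolding W_def
      by (intro continuous_at_imp_continuous_on ballI continuous_intros cU)
    have "(W \<longlongrightarrow> 0 * 0) at_top" unfolding W_def by (intro tendsto_intros lU)
    then have "\<forall>\<^sub>F x in at_top. W x < W x0" using W0 by (simp add: order_tendstoD(2))
    then obtain T2 where T2: "\<And>x. x \<ge> T2 \<Longrightarrow> W x < W x0" unfolding eventually_at_top_linorder by blast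
    have "(W \<longlongrightarrow> 0 * 0) at_bot" unfolding W_def by (intro tendsto_intros lU)
    then have "\<forall>\<^sub>F x in at_bot. W x < W x0" using W0 by (simp add: order_tendstoD(2))
    then obtain T1 where T1: "\<And>x. x \<le> T1 \<Longrightarrow> W x < W x0" unfolding eventually_at_bot_linorder by blast
    define a where "a = min T1 (x0 - 1)"
    define b where "b = max T2 (x0 + 1)"
    have ab: "{a..b} \<noteq> {}" unfolding a_def b_def by (auto simp: min_def max_def)
    obtain p where p: "p \<in> {a..b}" "\<And>y. y \<in> {a..b} \<Longrightarrow> W y \<le> W p"
      using continuous_attains_sup[OF compact_Icc ab cW[of "{a..b}"]] by blast
    have x0ab: "x0 \<in> {a..b}" unfolding a_def b_def by auto
    have Wp: "W p \<ge> W x0" using p(2)[OF x0ab] .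
    have "p \<noteq> a" using T1[of a] Wp unfolding a_def by auto
    moreover have "p \<noteq> b" using T2[of b] Wp unfolding b_def by auto
    ultimately have pab: "a < p" "p < b" using p(1) by auto
    have "U1 p * U p + U1 p * U p = 0"
    proof (rule DERIV_local_max[OF dW, of "min (p - a) (b - p)"])
      show "0 < min (p - a) (b - p)" using pab by simp
      show "\<forall>y. \<bar>p - y\<bar> < min (p - a) (b - p) \<longrightarrow> W y \<le> W p"
        using p(2) by (auto simp: abs_if split: if_splits)
    qed
    then have "U1 p * U p = 0" by simp
    moreover have "(U p)\<^sup>2 = (U1 p)\<^sup>2" using q0[of p] unfolding q_def by simp
    ultimately have "U p = 0" by (metis mult_zero_left power2_eq_square power_zero_numeral zero_power2 mult_eq_0_iff)
    then show False using Wp W0 unfolding W_def by simp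
  next
    case True
    define S where "S = {t. q t \<noteq> 0}"
    have Sne: "S \<noteq> {}" using True unfolding S_def by auto
    have Sbdd: "bdd_below S" unfolding S_def bdd_below_def
    proof (rule exI[of _ R], intro ballI)
      fix t assume "t \<in> {t. q t \<noteq> 0}"
      then show "R \<le> t" using R[of t] by force
    qed
    define \<alpha> where "\<alpha> = Inf S"
    have lt: "\<And>t. t < \<alpha> \<Longrightarrow> q t = 0"
      using cInf_lower[OF _ Sbdd] unfolding \<alpha>_def S_def by force
    have qa: "q \<alpha> = 0" by (rule zero_at_left_end[OF cq lt])
    have near: "\<exists>t. \<alpha> < t \<and> t < \<alpha> + d \<and> q t \<noteq> 0" if "d > 0" for d
    proof -
      have "Inf S < \<alpha> + d" using that unfolding \<alpha>_def by simp
      then obtain x where x: "x \<in> S" "x < \<alpha> + d" using cInf_less_iff[OF Sne Sbdd] by blast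
      have "\<alpha> \<le> x" using cInf_lower[OF x(1) Sbdd] unfolding \<alpha>_def .
      moreover have "x \<noteq> \<alpha>" using x(1) qa unfolding S_def by auto
      ultimately have "\<alpha> < x" by simp
      then show ?thesis using x unfolding S_def by auto
    qed
    have nearev: False if ev: "\<forall>\<^sub>F x in at \<alpha>. P x" and imp: "\<And>x. P x \<Longrightarrow> q x \<noteq> 0 \<Longrightarrow> False" for P
    proof -
      obtain d where d: "d > 0" "\<And>x. x \<noteq> \<alpha> \<Longrightarrow> dist x \<alpha> < d \<Longrightarrow> P x"
        using ev unfolding eventually_at by auto
      obtain t where t: "\<alpha> < t" "t < \<alpha> + d" "q t \<noteq> 0" using near[OF d(1)] by blast
      have "P t" using d(2)[of t] t by (auto simp: dist_real_def)
      then show False using imp t(3) by blast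
    qed
    have psia: "psi \<alpha> = 0"
    proof (rule ccontr)
      assume "psi \<alpha> \<noteq> 0"
      then have "\<forall>\<^sub>F x in at \<alpha>. psi x \<noteq> 0"
        using tendsto_imp_eventually_ne[of psi "psi \<alpha>" "at \<alpha>" 0] cpsi[OF qa]
        by (simp add: isCont_def)
      then show False by (rule nearev) (use qpsi in auto)
    qed
    then have ha: "U \<alpha> * f1 0 + g1 0 - c = 0" unfolding psi_def F1_def G1_def using qa by simp
    then have Ua: "U \<alpha> \<noteq> 0" and f10: "f1 0 \<noteq> 0" using assms(4) by auto
    have U1a: "U1 \<alpha> \<noteq> 0" using qa Ua unfolding q_def by auto
    have UM: "U1 t * M t = 0" if "t < \<alpha>" for t
    proof -
      have "2 * U1 t * M t = 0"
      proof (rule DERIV_local_max[OF dq, of "\<alpha> - t"])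
        show "0 < \<alpha> - t" using that by simp
        show "\<forall>y. \<bar>t - y\<bar> < \<alpha> - t \<longrightarrow> q y \<le> q t"
          using lt that by (auto simp: abs_if)
      qed
      then show ?thesis by simp
    qed
    have "U1 \<alpha> * M \<alpha> = 0"
      using zero_at_left_end[OF isCont_mult[OF cU1 cM]] UM by blast
    then have Ma: "M \<alpha> = 0" using U1a by simp
    obtain df Bf where df: "df > 0" and Bf: "\<And>y. y \<noteq> 0 \<Longrightarrow> \<bar>y\<bar> < df \<Longrightarrow> \<bar>f1 y - F y / y\<bar> \<le> Bf * \<bar>y\<bar>"
      using quot_bound[OF df1 cf1' dF F0] by blast
    obtain dg Bg where dg: "dg > 0" and Bg: "\<And>y. y \<noteq> 0 \<Longrightarrow> \<bar>y\<bar> < dg \<Longrightarrow> \<bar>g1 y - G y / y\<bar> \<le> Bg * \<bar>y\<bar>"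
      using quot_bound[OF dg1 cg1' dG G0] by blast
    have tq: "(q \<longlongrightarrow> 0) (at \<alpha>)" using cq[of \<alpha>] qa by (simp add: isCont_def)
    have ev1: "\<forall>\<^sub>F x in at \<alpha>. \<bar>q x\<bar> < min df dg"
      using tendsto_rabs[OF tq] df dg by (intro order_tendstoD(2)) auto
    have "((\<lambda>x. \<bar>F1 (q x)\<bar>) \<longlongrightarrow> \<bar>F1 0\<bar>) (at \<alpha>)"
      by (intro tendsto_rabs isCont_tendsto_compose[OF cF1 tq])
    then have ev2: "\<forall>\<^sub>F x in at \<alpha>. \<bar>f1 0\<bar> / 2 < \<bar>F1 (q x)\<bar>"
      using f10 by (intro order_tendstoD(1)) (auto simp: F1_def)
    have "((\<lambda>x. 2 * (\<bar>U x\<bar> * \<bar>Bf\<bar> + \<bar>Bg\<bar>) * \<bar>M x\<bar>) \<longlongrightarrow> 2 * (\<bar>U \<alpha>\<bar> * \<bar>Bf\<bar> + \<bar>Bg\<bar>) * \<bar>M \<alpha>\<bar>) (at \<alpha>)"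
      using cU[of \<alpha>] cM[of \<alpha>] unfolding isCont_def by (intro tendsto_intros)
    then have ev3: "\<forall>\<^sub>F x in at \<alpha>. 2 * (\<bar>U x\<bar> * \<bar>Bf\<bar> + \<bar>Bg\<bar>) * \<bar>M x\<bar> < \<bar>f1 0\<bar> / 2"
      using f10 Ma by (intro order_tendstoD(2)) auto
    show False
    proof (rule nearev[OF eventually_conj[OF ev1 eventually_conj[OF ev2 ev3]]])
      fix t assume H: "\<bar>q t\<bar> < min df dg \<and> \<bar>f1 0\<bar> / 2 < \<bar>F1 (q t)\<bar> \<and>
          2 * (\<bar>U t\<bar> * \<bar>Bf\<bar> + \<bar>Bg\<bar>) * \<bar>M t\<bar> < \<bar>f1 0\<bar> / 2" and qt: "q t \<noteq> 0"
      define y where "y = q t"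
      have y0: "y \<noteq> 0" and ydf: "\<bar>y\<bar> < df" and ydg: "\<bar>y\<bar> < dg" using qt H unfolding y_def by auto
      have psit: "psi t = 0" using qpsi[of t] qt by simp
      define h where "h = U t * f1 y + g1 y - c"
      have "h = h - psi t" using psit by simp
      also have "\<dots> = U t * (f1 y - F y / y) + (g1 y - G y / y)"
        unfolding h_def psi_def F1_def G1_def y_def using y0 unfolding y_def by (simp add: algebra_simps)
      finally have hexp: "h = U t * (f1 y - F y / y) + (g1 y - G y / y)" .
      have hb: "\<bar>h\<bar> \<le> (\<bar>U t\<bar> * \<bar>Bf\<bar> + \<bar>Bg\<bar>) * \<bar>y\<bar>"
      proof -
        have "\<bar>h\<bar> \<le> \<bar>U t\<bar> * \<bar>f1 y - F y / y\<bar> + \<bar>g1 y - G y / y\<bar>"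
          unfolding hexp by (metis abs_mult abs_triangle_ineq)
        also have "\<dots> \<le> \<bar>U t\<bar> * (\<bar>Bf\<bar> * \<bar>y\<bar>) + \<bar>Bg\<bar> * \<bar>y\<bar>"
        proof (rule add_mono)
          show "\<bar>U t\<bar> * \<bar>f1 y - F y / y\<bar> \<le> \<bar>U t\<bar> * (\<bar>Bf\<bar> * \<bar>y\<bar>)"
            using Bf[OF y0 ydf] by (intro mult_left_mono) (auto intro: order_trans[OF _ mult_right_mono])
          show "\<bar>g1 y - G y / y\<bar> \<le> \<bar>Bg\<bar> * \<bar>y\<bar>"
            using Bg[OF y0 ydg] by (auto intro: order_trans[OF _ mult_right_mono])
        qed
        finally show ?thesis by (simp add: algebra_simps)
      qed
      have "E t = 0" by (rule E0)
      then have "h * M t + y * F1 y / 2 = 0"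
        unfolding E_def K_def h_def y_def using FF1 by (simp add: algebra_simps)
      then have "y * F1 y = - 2 * (h * M t)" by linarith
      then have "\<bar>y * F1 y\<bar> = \<bar>- 2 * (h * M t)\<bar>" by simp
      then have "\<bar>y\<bar> * \<bar>F1 y\<bar> = 2 * (\<bar>h\<bar> * \<bar>M t\<bar>)"
        by (simp add: abs_mult)
      also have "\<dots> \<le> 2 * ((\<bar>U t\<bar> * \<bar>Bf\<bar> + \<bar>Bg\<bar>) * \<bar>y\<bar> * \<bar>M t\<bar>)"
        using hb by (intro mult_left_mono mult_right_mono) auto
      also have "\<dots> = \<bar>y\<bar> * (2 * (\<bar>U t\<bar> * \<bar>Bf\<bar> + \<bar>Bg\<bar>) * \<bar>M t\<bar>)" by (simp add: algebra_simps)
      also have "\<dots> < \<bar>y\<bar> * \<bar>F1 y\<bar>"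
        using H y0 unfolding y_def by (intro mult_strict_left_mono) auto
      finally show False by simp
    qed
  qed
qed
end
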